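(* Let $\varepsilon>0$ and let $\varepsilon_1,\varepsilon_2>0$ be tolerances such that $mM\Lambda\varepsilon_2<1$ and $$\varepsilon_1+mM\Lambda_s\varepsilon_2+(C_0+\varepsilon_2)\big(mM\Lambda\varepsilon_1+m(\Lambda_s+\Lambda\varepsilon_1)\delta\big)\le \varepsilon,\qquad \delta:=\frac{M^2}{1-mM\Lambda\varepsilon_2}\,m\Lambda\varepsilon_2 .$$ Fix $w\in\mathbb{R}^m$ with $K_w\neq\emptyset$ and let $\hat u$ be produced by the algorithm described in the context with these tolerances (for any admissible choices of $\hat u_0$ and $\hat\phi_1,\dots,\hat\phi_m$). Then $\hat G$ is invertible and $$\|u-\hat u\|_{H^1(\Omega)}\le R(K_w)_{H^1(\Omega)}+\varepsilon\qquad\text{for every } u\in K_w .$$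
   Context: Let $\Omega\subset\mathbb{R}^d$, $d\in\{2,3\}$, be a bounded Lipschitz domain with boundary $\Gamma=\partial\Omega$; for $v\in H^1(\Omega)$ write $v_\Gamma$ for its trace. Fix $s>1/2$ and a Hilbert norm $\|\cdot\|_{H^s(\Gamma)}$ on the Sobolev space $H^s(\Gamma)$ (compactly embedded in $H^{1/2}(\Gamma)$). Let $\mathcal H^s(\Omega)$ be the Hilbert space of harmonic functions $v\in H^1(\Omega)$ with $v_\Gamma\in H^s(\Gamma)$, normed by $\|v\|_{\mathcal H^s(\Omega)}:=\|v_\Gamma\|_{H^s(\Gamma)}$, and let $C_s$ be a constant with $\|v\|_{H^1(\Omega)}\le C_s\|v\|_{\mathcal H^s(\Omega)}$ for all $v\in\mathcal H^s(\Omega)$. Fix $f\in H^{-1}(\Omega)$ and let $K:=\{u\in H^1(\Omega): -\Delta u=f \text{ in }\Omega,\ u_\Gamma=g \text{ for some } g\in H^s(\Gamma),\ \|g\|_{H^s(\Gamma)}\le 1\}$. Let $u_0\in H^1(\Omega)$ solve $-\Delta u_0=f$, $u_0|_\Gamma=0$. Let $\lambda_1,\dots,\lambda_m$ be continuous linear functionals on $H^1(\Omega)$ with $|\lambda_j(v)|\le\Lambda\|v\|_{H^1(\Omega)}$ for all $j$ and $v$, whose restrictions to $\mathcal H^s(\Omega)$ are linearly independent; set $\lambda(v):=(\lambda_1(v),\dots,\lambda_m(v))$ and $\Lambda_s:=C_s\Lambda$. Let $\phi_j\in\mathcal H^s(\Omega)$ be the Riesz representer of $\lambda_j$ in $\mathcal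 H^s(\Omega)$, i.e. $\lambda_j(v)=\langle v,\phi_j\rangle_{\mathcal H^s(\Omega)}$ for all $v\in\mathcal H^s(\Omega)$; let $G=(g_{i,j})$, $g_{i,j}:=\langle\phi_i,\phi_j\rangle_{\mathcal H^s(\Omega)}=\lambda_j(\phi_i)$, $M:=\|G^{-1}\|_1$ where $\|\cdot\|_1$ is the $\ell_1\to\ell_1$ operator norm, and $C_0:=\max_j\|\phi_j\|_{H^1(\Omega)}$. For $w\in\mathbb{R}^m$, $K_w:=\{u\in K:\lambda(u)=w\}$ and $R(K_w)_{H^1(\Omega)}$ is the radius of a smallest ball in $H^1(\Omega)$ containing $K_w$. On $\mathbb{R}^m$ use $\|z\|:=(\frac1m\sum_j z_j^2)^{1/2}$. Algorithm (given data $w$ and tolerances $\varepsilon_1,\varepsilon_2$): (1) choose any $\hat u_0\in H^1(\Omega)$ with $\|u_0-\hat u_0\|_{H^1(\Omega)}\le\varepsilon_1$ and set $\hat w:=w-\lambda(\hat u_0)$; (2) choose any $\hat\phi_j\in H^1(\Omega)$ with $\|\phi_j-\hat\phi_j\|_{H^1(\Omega)}\le\varepsilon_2$, $j=1,\dots,m$; (3) form $\hat G=(\hat g_{i,j})$, $\hat g_{i,j}:=\lambda_j(\hat\phi_i)$; (4) solve $\hat G\hat a=\hat w$ and set $\hat u:=\hat u_0+\sum_{j=1}^m\hat a_j\hat\phi_j$. *)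

theory Defs
  imports "HOL-Analysis.Analysis"
begin

text \<open>Abstract rendering of the PDE setting.
  'h : the Hilbert space H^1(Omega) (its norm is the H^1 norm);
  tr : the trace map H^1(Omega) to boundary functions 'b;
  lap : the map u to -Laplace(u), from H^1(Omega) into H^{-1}(Omega) ('d);
  Hs : the subspace H^s(Gamma) of boundary functions, with Hilbert inner product ipS.\<close>

definition snorm :: "('b \<Rightarrow> 'b \<Rightarrow> real) \<Rightarrow> 'b \<Rightarrow> real" where
  "snorm ipS g = sqrt (ipS g g)"

definition harm_space :: "('h \<Rightarrow> 'd::zero) \<Rightarrow> ('h \<Rightarrow> 'b) \<Rightarrow> 'b set \<Rightarrow> 'h set" where
  "harm_space lap tr Hs = {v. lap v = 0 \<and> tr v \<in> Hs}"

definition Kset :: "('h \<Rightarrow> 'd) \<Rightarrow> ('h \<Rightarrow> 'b) \<Rightarrow> 'b set \<Rightarrow> ('b \<Rightarrow> 'b \<Rightarrow> real) \<Rightarrow> 'd \<Rightarrow> 'h set" where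
  "Kset lap tr Hs ipS f = {u. lap u = f \<and> (\<exists>g\<in>Hs. tr u = g \<and> snorm ipS g \<le> 1)}"

definition cheb_radius :: "'a::metric_space set \<Rightarrow> real" where
  "cheb_radius S = Inf {r. \<exists>c. S \<subseteq> cball c r}"

definition l1n :: "real^'n \<Rightarrow> real" where
  "l1n x = (\<Sum>i\<in>UNIV. \<bar>x $ i\<bar>)"

definition l1_opnorm :: "real^'n^'m \<Rightarrow> real" where
  "l1_opnorm A = Sup {l1n (A *v x) | x. l1n x \<le> 1}"

end

theory Submission
  imports Defs
begin

lemma l1n_nonneg: "0 \<le> l1n x"
  unfolding l1n_def by (simp add: sum_nonneg)

lemma l1n_comp: "\<bar>x $ j\<bar> \<le> l1n x"
  unfolding l1n_def by (rule member_le_sum) auto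

lemma l1n_zero: "l1n x = 0 \<Longrightarrow> x = 0"
  using l1n_comp[of x] by (simp add: vec_eq_iff)

lemma l1n_add: "l1n (x + y) \<le> l1n x + l1n y"
  unfolding l1n_def by (simp add: sum.distrib[symmetric] sum_mono abs_triangle_ineq)

lemma l1n_diff: "l1n (x - y) \<le> l1n x + l1n y"
  unfolding l1n_def by (simp add: sum.distrib[symmetric] sum_mono abs_triangle_ineq4)

lemma l1n_bound: "(\<And>j. \<bar>x $ j\<bar> \<le> B) \<Longrightarrow> l1n (x::real^'n) \<le> real CARD('n) * B"
proof -
  assume "\<And>j. \<bar>x $ j\<bar> \<le> B"
  then have "l1n x \<le> (\<Sum>j\<in>(UNIV::'n set). B)" unfolding l1n_def by (intro sum_mono) auto
  then show ?thesis by simp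
qed

lemma l1n_scale: "l1n (c *s x) = \<bar>c\<bar> * l1n x"
  unfolding l1n_def by (simp add: abs_mult sum_distrib_left)

lemma mv_scale: "(A::real^'n^'m) *v (c *s x) = c *s (A *v x)"
  by (simp add: matrix_vector_mult_def vec_eq_iff sum_distrib_left mult_ac)

lemma l1n_mat:
  fixes A :: "real^'n^'m"
  assumes "\<forall>i j. \<bar>A$i$j\<bar> \<le> B"
  shows "l1n (A *v x) \<le> real CARD('m) * B * l1n x"
proof -
  have "l1n (A *v x) = (\<Sum>i\<in>UNIV. \<bar>\<Sum>j\<in>UNIV. A$i$j * x$j\<bar>)"
    by (simp add: l1n_def matrix_vector_mult_def)
  also have "\<dots> \<le> (\<Sum>i\<in>(UNIV::'m set). \<Sum>j\<in>UNIV. B * \<bar>x$j\<bar>)"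
  proof (rule sum_mono)
    fix i
    have "\<bar>\<Sum>j\<in>UNIV. A$i$j * x$j\<bar> \<le> (\<Sum>j\<in>UNIV. \<bar>A$i$j * x$j\<bar>)" by (rule sum_abs)
    also have "\<dots> \<le> (\<Sum>j\<in>UNIV. B * \<bar>x$j\<bar>)"
      by (intro sum_mono) (simp add: abs_mult assms mult_right_mono)
    finally show "\<bar>\<Sum>j\<in>UNIV. A$i$j * x$j\<bar> \<le> (\<Sum>j\<in>UNIV. B * \<bar>x$j\<bar>)" .
  qed
  also have "\<dots> = real CARD('m) * B * l1n x"
    by (simp add: l1n_def sum_distrib_left mult.assoc)
  finally show ?thesis .
qed

lemma opnorm_bdd:
  fixes A :: "real^'n^'m"
  shows "bdd_above {l1n (A *v x) | x. l1n x \<le> 1}"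
proof -
  define B where "B = (\<Sum>i\<in>UNIV. \<Sum>j\<in>UNIV. \<bar>A$i$j\<bar>)"
  have "\<forall>i j. \<bar>A$i$j\<bar> \<le> B"
  proof (intro allI)
    fix i j
    have "\<bar>A$i$j\<bar> \<le> (\<Sum>j\<in>UNIV. \<bar>A$i$j\<bar>)" by (rule member_le_sum) auto
    also have "\<dots> \<le> B" unfolding B_def by (rule member_le_sum) (auto simp: sum_nonneg)
    finally show "\<bar>A$i$j\<bar> \<le> B" .
  qed
  then have B0: "0 \<le> B" by (meson abs_ge_zero order_trans)
  show ?thesis
  proof (rule bdd_aboveI)
    fix y assume "y \<in> {l1n (A *v x) | x. l1n x \<le> 1}"
    then obtain x where y: "y = l1n (A *v x)" and x: "l1n x \<le> 1" by blast
    have "y \<le> real CARD('m) * B * l1n x" using l1n_mat[OF \<open>\<forall>i j. _\<close>] y by blast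
    also have "\<dots> \<le> real CARD('m) * B * 1" using x B0 by (intro mult_left_mono) auto
    finally show "y \<le> real CARD('m) * B" by simp
  qed
qed

lemma opnorm_nonneg: "0 \<le> l1_opnorm (A::real^'n^'m)"
proof -
  have "l1n (A *v 0) \<in> {l1n (A *v x) | x. l1n x \<le> 1}" by (auto simp: l1n_def intro!: exI[of _ 0])
  then have "l1n (A *v 0) \<le> l1_opnorm A" unfolding l1_opnorm_def by (rule cSup_upper[OF _ opnorm_bdd])
  then show ?thesis using l1n_nonneg order_trans by blast
qed

lemma opnorm_le: "l1n ((A::real^'n^'m) *v x) \<le> l1_opnorm A * l1n x"
proof (cases "x = 0")
  case True
  then show ?thesis by (simp add: l1n_def)
next
  case False
  define N where "N = l1n x"
  have N: "N > 0" using False l1n_zero l1n_nonneg N_def by (metis order_le_less)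
  define y where "y = (1/N) *s x"
  have "l1n y = 1" using N by (simp add: y_def l1n_scale N_def)
  then have "l1n (A *v y) \<in> {l1n (A *v x) | x. l1n x \<le> 1}" by auto
  then have "l1n (A *v y) \<le> l1_opnorm A" unfolding l1_opnorm_def by (rule cSup_upper[OF _ opnorm_bdd])
  moreover have "l1n (A *v y) = l1n (A *v x) / N" using N
    by (simp add: y_def mv_scale l1n_scale)
  ultimately show ?thesis using N by (simp add: N_def divide_le_eq mult.commute)
qed

lemma ipS_zero:
  fixes ipS :: "'b::real_vector \<Rightarrow> 'b \<Rightarrow> real"
  assumes scale: "\<forall>g\<in>Hs. \<forall>h\<in>Hs. \<forall>c. ipS (c *\<^sub>R g) h = c * ipS g h" and k: "k \<in> Hs"
  shows "ipS 0 k = 0"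
  using scale k by (metis mult_zero_left scaleR_zero_left)

lemma ipS_sum:
  fixes ipS :: "'b::real_vector \<Rightarrow> 'b \<Rightarrow> real"
  assumes sub: "subspace Hs"
    and add: "\<forall>g\<in>Hs. \<forall>h\<in>Hs. \<forall>k\<in>Hs. ipS (g + h) k = ipS g k + ipS h k"
    and scale: "\<forall>g\<in>Hs. \<forall>h\<in>Hs. \<forall>c. ipS (c *\<^sub>R g) h = c * ipS g h"
    and F: "finite F" and gs: "\<forall>j\<in>F. g j \<in> Hs" and k: "k \<in> Hs"
  shows "ipS (\<Sum>j\<in>F. c j *\<^sub>R g j) k = (\<Sum>j\<in>F. c j * ipS (g j) k)"
  using F gs
proof (induction F rule: finite_induct)
  case empty
  then show ?case using ipS_zero[OF scale k] by simp
next
  case (insert x F)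
  have s1: "c x *\<^sub>R g x \<in> Hs" using insert sub by (simp add: subspace_scale)
  have s2: "(\<Sum>j\<in>F. c j *\<^sub>R g j) \<in> Hs" using insert sub by (intro subspace_sum) (auto simp: subspace_scale)
  have "ipS (\<Sum>j\<in>insert x F. c j *\<^sub>R g j) k = ipS (c x *\<^sub>R g x + (\<Sum>j\<in>F. c j *\<^sub>R g j)) k"
    using insert by simp
  also have "\<dots> = ipS (c x *\<^sub>R g x) k + ipS (\<Sum>j\<in>F. c j *\<^sub>R g j) k"
    using add s1 s2 k by blast
  also have "\<dots> = c x * ipS (g x) k + (\<Sum>j\<in>F. c j * ipS (g j) k)"
    using insert scale k by simp
  finally show ?case using insert by simp
qed

lemma ipS_diff:
  fixes ipS :: "'b::real_vector \<Rightarrow> 'b \<Rightarrow> real"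
  assumes sub: "subspace Hs"
    and add: "\<forall>g\<in>Hs. \<forall>h\<in>Hs. \<forall>k\<in>Hs. ipS (g + h) k = ipS g k + ipS h k"
    and scale: "\<forall>g\<in>Hs. \<forall>h\<in>Hs. \<forall>c. ipS (c *\<^sub>R g) h = c * ipS g h"
    and x: "x \<in> Hs" and y: "y \<in> Hs" and k: "k \<in> Hs"
  shows "ipS (x - y) k = ipS x k - ipS y k"
proof -
  have ny: "(-1) *\<^sub>R y \<in> Hs" using sub y by (simp add: subspace_neg)
  have 1: "ipS (x + (-1) *\<^sub>R y) k = ipS x k + ipS ((-1) *\<^sub>R y) k" by (rule add[rule_format, OF x ny k])
  have 2: "ipS ((-1) *\<^sub>R y) k = (-1) * ipS y k" by (rule scale[rule_format, OF y k])
  have 3: "ipS (x - y) k = ipS (x + (-1) *\<^sub>R y) k" by simp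
  show ?thesis using 1 2 3 by linarith
qed

lemma final_arith:
  fixes M m Lam eps1 eps2 C0 A D Lams delta tol eps :: real
  assumes M0: "0 \<le> M" and m0: "0 \<le> m" and L: "0 < Lam" and e2: "0 < eps2" and e1: "0 \<le> eps1"
    and C0: "0 \<le> C0" and small: "m * M * Lam * eps2 < 1" and A0: "0 \<le> A" and Ab: "A \<le> M * (m * Lams)"
    and D0: "0 \<le> D" and Db: "D \<le> M * (m * Lam * eps1 + m * Lam * eps2 * A + m * Lam * eps2 * D)"
    and dd: "delta = M\<^sup>2 / (1 - m * M * Lam * eps2) * (m * Lam * eps2)"
    and tol: "eps1 + m * M * Lams * eps2
              + (C0 + eps2) * (m * M * Lam * eps1 + m * (Lams + Lam * eps1) * delta) \<le> eps"
  shows "eps1 + eps2 * A + (C0 + eps2) * D \<le> eps"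
proof -
  define k where "k = m * M * Lam * eps2"
  have k1: "0 < 1 - k" using small k_def by simp
  have k0: "0 \<le> k" unfolding k_def using M0 m0 L e2 by simp
  define T where "T = m * M * Lam * eps1 + m * (Lams + Lam * eps1) * delta"
  have dk: "delta * (1 - k) = M * k"
    using k1 unfolding dd k_def[symmetric] by (simp add: k_def power2_eq_square field_simps)
  have "T * (1 - k) = m * M * Lam * eps1 * (1 - k) + m * (Lams + Lam * eps1) * (delta * (1 - k))"
    unfolding T_def by (simp add: algebra_simps)
  also have "\<dots> = m * M * Lam * eps1 + k * (M * (m * Lams))" by (simp only: dk) (simp add: k_def algebra_simps)
  finally have Tk: "T * (1 - k) = m * M * Lam * eps1 + k * (M * (m * Lams))" .
  have "D * (1 - k) \<le> M * (m * Lam * eps1) + k * A" using Db unfolding k_def by (simp add: algebra_simps)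
  also have "\<dots> \<le> m * M * Lam * eps1 + k * (M * (m * Lams))" using mult_left_mono[OF Ab k0] by simp
  finally have "D * (1 - k) \<le> T * (1 - k)" using Tk by simp
  then have DT: "D \<le> T" using k1 by simp
  have "eps2 * A \<le> m * M * Lams * eps2" using Ab e2 by (simp add: mult_left_mono mult.commute mult.left_commute)
  moreover have "(C0 + eps2) * D \<le> (C0 + eps2) * T" using DT C0 e2 by (intro mult_left_mono) auto
  ultimately show ?thesis using tol unfolding T_def by linarith
qed

theorem mainTheorem1:
  fixes lap :: "'h::{real_inner,complete_space} \<Rightarrow> 'd::real_vector"
    and tr :: "'h \<Rightarrow> 'b::real_vector"
    and Hs :: "'b set"
    and ipS :: "'b \<Rightarrow> 'b \<Rightarrow> real"
    and f :: 'd
    and u0 :: 'h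
    and lam :: "'m::finite \<Rightarrow> 'h \<Rightarrow> real"
    and Lam Cs :: real
    and phi :: "'m \<Rightarrow> 'h"
    and w :: "real^'m"
    and eps eps1 eps2 :: real
    and u0hat :: 'h
    and phihat :: "'m \<Rightarrow> 'h"
    and V :: "'h set" and Kw :: "'h set"
    and m M C0 Lams delta :: real
    and G Ghat :: "real^'m^'m"
    and what :: "real^'m"
  assumes lap_lin: "linear lap"
    and def0: "V = harm_space lap tr Hs"
    and def1: "m = real CARD('m)"
    and def2: "G = (\<chi> i j. ipS (tr (phi i)) (tr (phi j)))"
    and def3: "M = l1_opnorm (matrix_inv G)"
    and def4: "C0 = Max (range (\<lambda>j. norm (phi j)))"
    and def5: "Lams = Cs * Lam"
    and def6: "delta = M\<^sup>2 / (1 - m * M * Lam * eps2) * (m * Lam * eps2)"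
    and def7: "Kw = {u \<in> Kset lap tr Hs ipS f. (\<chi> j. lam j u) = w}"
    and def8: "Ghat = (\<chi> i j. lam j (phihat i))"
    and def9: "what = w - (\<chi> j. lam j u0hat)"
    and tr_lin: "linear tr"
    and Hs_sub: "subspace Hs"
    and ipS_sym: "\<forall>g\<in>Hs. \<forall>h\<in>Hs. ipS g h = ipS h g"
    and ipS_add: "\<forall>g\<in>Hs. \<forall>h\<in>Hs. \<forall>k\<in>Hs. ipS (g + h) k = ipS g k + ipS h k"
    and ipS_scale: "\<forall>g\<in>Hs. \<forall>h\<in>Hs. \<forall>c. ipS (c *\<^sub>R g) h = c * ipS g h"
    and ipS_pos: "\<forall>g\<in>Hs. 0 \<le> ipS g g"
    and ipS_definite: "\<forall>g\<in>Hs. ipS g g = 0 \<longrightarrow> g = 0"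
    and Cs_bound: "\<forall>v\<in>V. norm v \<le> Cs * snorm ipS (tr v)"
    and u0_eq: "lap u0 = f" and u0_bdry: "tr u0 = 0"
    and lam_lin: "\<forall>j. bounded_linear (lam j)"
    and lam_bound: "\<forall>j v. \<bar>lam j v\<bar> \<le> Lam * norm v"
    and lam_indep: "\<forall>c::real^'m. (\<forall>v\<in>V. (\<Sum>j\<in>UNIV. c $ j * lam j v) = 0) \<longrightarrow> c = 0"
    and riesz: "\<forall>j. phi j \<in> V \<and> (\<forall>v\<in>V. lam j v = ipS (tr v) (tr (phi j)))"
    and eps_pos: "eps > 0" and eps1_pos: "eps1 > 0" and eps2_pos: "eps2 > 0"
    and small: "m * M * Lam * eps2 < 1"
    and tol: "eps1 + m * M * Lams * eps2
              + (C0 + eps2) * (m * M * Lam * eps1 + m * (Lams + Lam * eps1) * delta) \<le> eps"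
    and Kw_ne: "Kw \<noteq> {}"
    and u0hat_close: "norm (u0 - u0hat) \<le> eps1"
    and phihat_close: "\<forall>j. norm (phi j - phihat j) \<le> eps2"
  shows "invertible Ghat \<and>
         (\<forall>a. Ghat *v a = what \<longrightarrow>
            (\<forall>u\<in>Kw. norm (u - (u0hat + (\<Sum>j\<in>UNIV. a $ j *\<^sub>R phihat j)))
                      \<le> cheb_radius Kw + eps))"
proof -
  have Vmem: "\<And>v. v \<in> V \<longleftrightarrow> lap v = 0 \<and> tr v \<in> Hs" using def0 by (simp add: harm_space_def)
  have lamL: "\<And>j. linear (lam j)" using lam_lin bounded_linear.linear by blast
  have phiV: "\<And>j. phi j \<in> V" using riesz by blast
  have lamV: "\<And>j v. v \<in> V \<Longrightarrow> lam j v = ipS (tr v) (tr (phi j))" using riesz by blast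
  have gH: "\<And>j. tr (phi j) \<in> Hs" using phiV Vmem by blast
  have Gij: "\<And>i j. G$i$j = lam j (phi i)" using def2 lamV phiV by simp
  have Gsym: "\<And>i j. G$i$j = G$j$i" using def2 ipS_sym gH by simp
  have snorm_nn: "\<And>g. g \<in> Hs \<Longrightarrow> 0 \<le> snorm ipS g" using ipS_pos by (simp add: snorm_def)
  define P where "P = (\<lambda>c::real^'m. \<Sum>j\<in>UNIV. c$j *\<^sub>R phi j)"
  have trP: "\<And>c. tr (P c) = (\<Sum>j\<in>UNIV. c$j *\<^sub>R tr (phi j))"
    unfolding P_def by (simp add: linear_sum[OF tr_lin] linear_scale[OF tr_lin])
  have PH: "\<And>c. tr (P c) \<in> Hs" unfolding trP using Hs_sub gH
    by (intro subspace_sum) (auto simp: subspace_scale)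
  have lapP: "\<And>c. lap (P c) = 0" unfolding P_def using phiV Vmem
    by (simp add: linear_sum[OF lap_lin] linear_scale[OF lap_lin])
  have PV: "\<And>c. P c \<in> V" using PH lapP Vmem by blast
  have lamP: "\<And>i c. lam i (P c) = (G *v c)$i"
  proof -
    fix i c
    have "lam i (P c) = (\<Sum>j\<in>UNIV. c$j * lam i (phi j))"
      unfolding P_def by (simp add: linear_sum[OF lamL] linear_scale[OF lamL])
    also have "\<dots> = (\<Sum>j\<in>UNIV. G$i$j * c$j)"
      by (intro sum.cong refl) (metis Gij Gsym mult.commute)
    also have "\<dots> = (G *v c)$i" by (simp add: matrix_vector_mult_def)
    finally show "lam i (P c) = (G *v c)$i" .
  qed
  have ipP: "\<And>c v. v \<in> V \<Longrightarrow> ipS (tr (P c)) (tr v) = (\<Sum>j\<in>UNIV. c$j * lam j v)"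
  proof -
    fix c v assume v: "v \<in> V"
    then have tv: "tr v \<in> Hs" using Vmem by blast
    have "ipS (tr (P c)) (tr v) = (\<Sum>j\<in>UNIV. c$j * ipS (tr (phi j)) (tr v))"
      unfolding trP
      using ipS_sum[OF Hs_sub ipS_add ipS_scale, where F=UNIV and g="\<lambda>j. tr (phi j)" and k="tr v" and c="\<lambda>j. c$j"] gH tv
      by simp
    also have "\<dots> = (\<Sum>j\<in>UNIV. c$j * lam j v)"
    proof (intro sum.cong refl)
      fix j
      have "ipS (tr (phi j)) (tr v) = lam j v" using lamV[OF v] ipS_sym gH tv by metis
      then show "c$j * ipS (tr (phi j)) (tr v) = c$j * lam j v" by simp
    qed
    finally show "ipS (tr (P c)) (tr v) = (\<Sum>j\<in>UNIV. c$j * lam j v)" .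
  qed
  have "\<exists>v\<in>V. \<exists>j. lam j v \<noteq> 0"
  proof (rule ccontr)
    assume "\<not> ?thesis"
    then have "\<forall>v\<in>V. (\<Sum>j\<in>UNIV. (\<chi> j. (1::real))$j * lam j v) = 0" by simp
    then have "(\<chi> j. (1::real)) = (0::real^'m)" using lam_indep by blast
    then show False by (simp add: vec_eq_iff)
  qed
  then obtain v0 j0 where v0: "v0 \<in> V" "lam j0 v0 \<noteq> 0" by blast
  have "v0 \<noteq> 0" using v0 linear_0[OF lamL] by metis
  then have nv0: "norm v0 > 0" by simp
  have "0 < \<bar>lam j0 v0\<bar>" using v0 by simp
  also have "\<dots> \<le> Lam * norm v0" using lam_bound by blast
  finally have "0 < Lam * norm v0" .
  then have Lampos: "Lam > 0" using nv0 by (simp add: zero_less_mult_iff)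
  have "norm v0 \<le> Cs * snorm ipS (tr v0)" using Cs_bound v0 by blast
  moreover have "0 \<le> snorm ipS (tr v0)" using snorm_nn v0 Vmem by blast
  ultimately have Cspos: "Cs \<ge> 0" using nv0 by (smt (verit) mult_nonpos_nonneg)
  have Gker: "\<forall>c. G *v c = 0 \<longrightarrow> c = 0"
  proof (intro allI impI)
    fix c assume Gc: "G *v c = 0"
    have "ipS (tr (P c)) (tr (P c)) = (\<Sum>j\<in>UNIV. c$j * lam j (P c))" by (rule ipP[OF PV])
    also have "\<dots> = (\<Sum>j\<in>UNIV. c$j * (G *v c)$j)" by (simp add: lamP)
    also have "\<dots> = 0" using Gc by simp
    finally have trc: "tr (P c) = 0" using ipS_definite PH by blast
    have "\<forall>v\<in>V. (\<Sum>j\<in>UNIV. c$j * lam j v) = 0"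
    proof
      fix v assume v: "v \<in> V"
      have "(\<Sum>j\<in>UNIV. c$j * lam j v) = ipS (tr (P c)) (tr v)" using ipP[OF v] by simp
      also have "\<dots> = 0" unfolding trc using ipS_zero[OF ipS_scale] v Vmem by blast
      finally show "(\<Sum>j\<in>UNIV. c$j * lam j v) = 0" .
    qed
    then show "c = 0" using lam_indep by blast
  qed
  have Ginv: "invertible G" using Gker by (simp add: invertible_left_inverse matrix_left_invertible_ker)
  define Gi where "Gi = matrix_inv G"
  have GGi: "G ** Gi = mat 1 \<and> Gi ** G = mat 1"
    using someI_ex[OF Ginv[unfolded invertible_def]] unfolding Gi_def matrix_inv_def by blast
  have GiG: "\<And>x. Gi *v (G *v x) = x" using GGi by (simp add: matrix_vector_mul_assoc)
  have GGiv: "\<And>x. G *v (Gi *v x) = x" using GGi by (simp add: matrix_vector_mul_assoc)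
  have M0: "0 \<le> M" unfolding def3 Gi_def[symmetric] by (rule opnorm_nonneg)
  have Mle: "\<And>x. l1n x \<le> M * l1n (G *v x)"
  proof -
    fix x
    have "l1n x = l1n (Gi *v (G *v x))" by (simp add: GiG)
    also have "\<dots> \<le> M * l1n (G *v x)" unfolding def3 Gi_def[symmetric] by (rule opnorm_le)
    finally show "l1n x \<le> M * l1n (G *v x)" .
  qed
  define wp where "wp = w - (\<chi> j. lam j u0)"
  define astar where "astar = Gi *v wp"
  have Gas: "G *v astar = wp" by (simp add: astar_def GGiv)
  define ustar where "ustar = u0 + P astar"
  have Kin: "\<And>u. u \<in> Kw \<Longrightarrow> u - u0 \<in> V \<and> snorm ipS (tr (u - u0)) \<le> 1 \<and> (\<forall>j. lam j (u - u0) = wp$j)"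
  proof -
    fix u assume "u \<in> Kw"
    then have u: "lap u = f" "tr u \<in> Hs" "snorm ipS (tr u) \<le> 1" "(\<chi> j. lam j u) = w"
      using def7 by (auto simp: Kset_def)
    have tru: "tr (u - u0) = tr u" using u0_bdry linear_diff[OF tr_lin] by simp
    have "lap (u - u0) = 0" using u u0_eq linear_diff[OF lap_lin] by simp
    moreover have "\<forall>j. lam j (u - u0) = wp$j"
    proof
      fix j
      have "lam j u = w$j" using u(4) by (metis vec_lambda_beta)
      then show "lam j (u - u0) = wp$j" by (simp add: wp_def linear_diff[OF lamL])
    qed
    ultimately show "u - u0 \<in> V \<and> snorm ipS (tr (u - u0)) \<le> 1 \<and> (\<forall>j. lam j (u - u0) = wp$j)"
      using Vmem u tru by simp
  qed
  have Kout: "\<And>v. v \<in> V \<Longrightarrow> snorm ipS (tr v) \<le> 1 \<Longrightarrow> (\<forall>j. lam j v = wp$j) \<Longrightarrow> u0 + v \<in> Kw"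
  proof -
    fix v assume v: "v \<in> V" "snorm ipS (tr v) \<le> 1" "\<forall>j. lam j v = wp$j"
    have "lap (u0 + v) = f" using v Vmem u0_eq linear_add[OF lap_lin] by simp
    moreover have "tr (u0 + v) = tr v" using u0_bdry linear_add[OF tr_lin] by simp
    moreover have "(\<chi> j. lam j (u0 + v)) = w"
      using v by (simp add: vec_eq_iff wp_def linear_add[OF lamL])
    ultimately show "u0 + v \<in> Kw" using def7 v Vmem by (auto simp: Kset_def)
  qed
  have Knorm: "\<And>u. u \<in> Kw \<Longrightarrow> norm (u - u0) \<le> Cs"
  proof -
    fix u assume "u \<in> Kw"
    then have h: "u - u0 \<in> V" "snorm ipS (tr (u - u0)) \<le> 1" using Kin by auto
    have "norm (u - u0) \<le> Cs * snorm ipS (tr (u - u0))" using Cs_bound h by blast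
    also have "\<dots> \<le> Cs * 1" using h Cspos by (intro mult_left_mono) auto
    finally show "norm (u - u0) \<le> Cs" by simp
  qed
  have center: "\<And>u. u \<in> Kw \<Longrightarrow> norm (u - ustar) \<le> cheb_radius Kw"
  proof -
    fix u assume uK: "u \<in> Kw"
    define v where "v = u - u0"
    have v: "v \<in> V" "snorm ipS (tr v) \<le> 1" "\<forall>j. lam j v = wp$j" using Kin[OF uK] v_def by auto
    define p where "p = tr (P astar)"
    define q where "q = tr v"
    have pH: "p \<in> Hs" using PH p_def by blast
    have qH: "q \<in> Hs" using v Vmem q_def by blast
    define v' where "v' = 2 *\<^sub>R P astar - v"
    have trv': "tr v' = 2 *\<^sub>R p - q"
      by (simp add: v'_def p_def q_def linear_diff[OF tr_lin] linear_scale[OF tr_lin])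
    have p2H: "2 *\<^sub>R p \<in> Hs" using pH Hs_sub by (simp add: subspace_scale)
    have v'H: "tr v' \<in> Hs" unfolding trv' using p2H qH Hs_sub by (simp add: subspace_diff)
    have "lap v' = 0" using lapP v Vmem
      by (simp add: v'_def linear_diff[OF lap_lin] linear_scale[OF lap_lin])
    then have v'V: "v' \<in> V" using v'H Vmem by blast
    have lamv': "\<forall>j. lam j v' = wp$j"
      using v by (simp add: v'_def linear_diff[OF lamL] linear_scale[OF lamL] lamP Gas)
    define X where "X = (\<Sum>j\<in>UNIV. astar$j * wp$j)"
    have pq: "ipS p q = X" unfolding p_def q_def X_def using ipP[OF v(1)] v(3) by simp
    have pp: "ipS p p = X" unfolding p_def X_def using ipP[OF PV] by (simp add: lamP Gas)
    have qp: "ipS q p = X" using pq ipS_sym pH qH by metis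
    have lin: "\<And>k. k \<in> Hs \<Longrightarrow> ipS (2 *\<^sub>R p - q) k = 2 * ipS p k - ipS q k"
    proof -
      fix k assume k: "k \<in> Hs"
      have "ipS (2 *\<^sub>R p - q) k = ipS (2 *\<^sub>R p) k - ipS q k"
        by (rule ipS_diff[OF Hs_sub ipS_add ipS_scale p2H qH k])
      also have "ipS (2 *\<^sub>R p) k = 2 * ipS p k" by (rule ipS_scale[rule_format, OF pH k])
      finally show "ipS (2 *\<^sub>R p - q) k = 2 * ipS p k - ipS q k" .
    qed
    have r1: "ipS p (2 *\<^sub>R p - q) = 2 * X - X"
      using lin[OF pH] pp qp ipS_sym pH v'H trv' by metis
    have r2: "ipS q (2 *\<^sub>R p - q) = 2 * X - ipS q q"
      using lin[OF qH] pq ipS_sym qH v'H trv' by metis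
    have "ipS (tr v') (tr v') = ipS q q"
      unfolding trv' using lin[OF v'H[unfolded trv']] r1 r2 by simp
    then have sn: "snorm ipS (tr v') \<le> 1" using v(2) by (simp add: snorm_def q_def)
    define u' where "u' = u0 + v'"
    have u'K: "u' \<in> Kw" unfolding u'_def by (rule Kout[OF v'V sn lamv'])
    have u'eq: "2 *\<^sub>R (u - ustar) = u - u'"
      by (simp add: u'_def v'_def v_def ustar_def algebra_simps scaleR_2)
    define S where "S = {r. \<exists>c. Kw \<subseteq> cball c r}"
    have "Cs \<in> S" unfolding S_def
      using Knorm by (auto intro!: exI[of _ u0] simp: dist_norm norm_minus_commute)
    then have Sne: "S \<noteq> {}" by blast
    have "norm (u - ustar) \<le> Inf S"
    proof (rule cInf_greatest[OF Sne])
      fix r assume "r \<in> S"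
      then obtain c where c: "Kw \<subseteq> cball c r" unfolding S_def by blast
      have d1: "norm (u - c) \<le> r" using c uK by (auto simp: dist_norm norm_minus_commute)
      have d2: "norm (u' - c) \<le> r" using c u'K by (auto simp: dist_norm norm_minus_commute)
      have "2 * norm (u - ustar) = norm (2 *\<^sub>R (u - ustar))" by simp
      also have "\<dots> = norm ((u - c) - (u' - c))" unfolding u'eq by simp
      also have "\<dots> \<le> norm (u - c) + norm (u' - c)" by (rule norm_triangle_ineq4)
      finally show "norm (u - ustar) \<le> r" using d1 d2 by simp
    qed
    then show "norm (u - ustar) \<le> cheb_radius Kw" unfolding cheb_radius_def S_def .
  qed
  define E where "E = Ghat - G"
  have Eij: "\<forall>i j. \<bar>E$i$j\<bar> \<le> Lam * eps2"
  proof (intro allI)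
    fix i j
    have "E$i$j = lam j (phihat i - phi i)" by (simp add: E_def def8 Gij linear_diff[OF lamL])
    also have "\<bar>\<dots>\<bar> \<le> Lam * norm (phihat i - phi i)" using lam_bound by blast
    also have "\<dots> \<le> Lam * eps2" using phihat_close Lampos
      by (intro mult_left_mono) (auto simp: norm_minus_commute)
    finally show "\<bar>E$i$j\<bar> \<le> Lam * eps2" .
  qed
  have El1: "\<And>x. l1n (E *v x) \<le> m * (Lam * eps2) * l1n x"
    using l1n_mat[OF Eij] def1 by (simp add: mult.assoc)
  have l1n_neg: "\<And>x::real^'m. l1n (- x) = l1n x" by (simp add: l1n_def)
  define k where "k = m * M * Lam * eps2"
  have k1: "k < 1" using small k_def by simp
  have k0: "0 \<le> k" unfolding k_def using M0 Lampos eps2_pos def1 by simp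
  have Ghatinv: "invertible Ghat"
  proof -
    have "\<forall>x. Ghat *v x = 0 \<longrightarrow> x = 0"
    proof (intro allI impI)
      fix x assume hx: "Ghat *v x = 0"
      have "G *v x = - (E *v x)" using hx by (simp add: E_def matrix_vector_mult_diff_rdistrib)
      then have "l1n x \<le> M * l1n (E *v x)" using Mle[of x] l1n_neg by simp
      also have "\<dots> \<le> M * (m * (Lam * eps2) * l1n x)" using El1 M0 by (intro mult_left_mono) auto
      also have "\<dots> = k * l1n x" by (simp add: k_def)
      finally have le: "l1n x \<le> k * l1n x" .
      have "l1n x = 0"
      proof (rule ccontr)
        assume "l1n x \<noteq> 0"
        then have "0 < l1n x" using l1n_nonneg order_le_less by metis
        then have "k * l1n x < 1 * l1n x" using k1 by (intro mult_strict_right_mono) auto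
        then show False using le by simp
      qed
      then show "x = 0" by (rule l1n_zero)
    qed
    then show ?thesis by (simp add: invertible_left_inverse matrix_left_invertible_ker)
  qed
  obtain uK where uK: "uK \<in> Kw" using Kw_ne by blast
  have wpb: "\<And>j. \<bar>wp$j\<bar> \<le> Lams"
  proof -
    fix j
    have h: "uK - u0 \<in> V" "\<forall>j. lam j (uK - u0) = wp$j" using Kin[OF uK] by auto
    have "\<bar>wp$j\<bar> = \<bar>lam j (uK - u0)\<bar>" using h by simp
    also have "\<dots> \<le> Lam * norm (uK - u0)" using lam_bound by blast
    also have "\<dots> \<le> Lam * Cs" using Knorm[OF uK] Lampos by (intro mult_left_mono) auto
    finally show "\<bar>wp$j\<bar> \<le> Lams" by (simp add: def5 mult.commute)
  qed
  have A0: "0 \<le> l1n astar" by (rule l1n_nonneg)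
  have Ab: "l1n astar \<le> M * (m * Lams)"
  proof -
    have "l1n astar \<le> M * l1n wp" using Mle[of astar] Gas by simp
    also have "\<dots> \<le> M * (m * Lams)" using l1n_bound[of wp Lams] wpb def1 M0 by (intro mult_left_mono) auto
    finally show ?thesis .
  qed
  have phinorm: "\<And>j. norm (phi j) \<le> C0" unfolding def4 by (rule Max_ge) auto
  have C0nn: "0 \<le> C0" using phinorm[of undefined] norm_ge_zero[of "phi undefined"] by linarith
  have phihatnorm: "\<And>j. norm (phihat j) \<le> C0 + eps2"
  proof -
    fix j
    have "norm (phihat j) = norm (phi j - (phi j - phihat j))" by simp
    also have "\<dots> \<le> norm (phi j) + norm (phi j - phihat j)" by (rule norm_triangle_ineq4)
    also have "\<dots> \<le> C0 + eps2" using phinorm phihat_close by (intro add_mono) auto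
    finally show "norm (phihat j) \<le> C0 + eps2" .
  qed
  have main: "\<forall>a. Ghat *v a = what \<longrightarrow>
            (\<forall>u\<in>Kw. norm (u - (u0hat + (\<Sum>j\<in>UNIV. a $ j *\<^sub>R phihat j))) \<le> cheb_radius Kw + eps)"
  proof (intro allI impI ballI)
    fix a u assume ha: "Ghat *v a = what" and uKw: "u \<in> Kw"
    define d where "d = a - astar"
    have Gd: "G *v d = (what - wp) - E *v astar - E *v d"
    proof -
      have "G *v d = G *v a - wp" by (simp add: d_def matrix_vector_mult_diff_distrib Gas)
      also have "G *v a = Ghat *v a - E *v a" by (simp add: E_def matrix_vector_mult_diff_rdistrib)
      also have "E *v a = E *v astar + E *v d" by (simp add: d_def matrix_vector_mult_diff_distrib)
      finally show ?thesis using ha by simp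
    qed
    have ww: "l1n (what - wp) \<le> m * (Lam * eps1)"
    proof -
      have "\<And>j. \<bar>(what - wp)$j\<bar> \<le> Lam * eps1"
      proof -
        fix j
        have "(what - wp)$j = lam j (u0 - u0hat)" by (simp add: def9 wp_def linear_diff[OF lamL])
        also have "\<bar>\<dots>\<bar> \<le> Lam * norm (u0 - u0hat)" using lam_bound by blast
        also have "\<dots> \<le> Lam * eps1" using u0hat_close Lampos by (intro mult_left_mono) auto
        finally show "\<bar>(what - wp)$j\<bar> \<le> Lam * eps1" .
      qed
      then show ?thesis using l1n_bound def1 by metis
    qed
    have Db: "l1n d \<le> M * (m * Lam * eps1 + m * Lam * eps2 * l1n astar + m * Lam * eps2 * l1n d)"
    proof -
      have "l1n (G *v d) \<le> l1n (what - wp - E *v astar) + l1n (E *v d)" unfolding Gd by (rule l1n_diff)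
      also have "\<dots> \<le> (l1n (what - wp) + l1n (E *v astar)) + l1n (E *v d)"
        using l1n_diff by (intro add_right_mono) 
      also have "\<dots> \<le> m * Lam * eps1 + m * Lam * eps2 * l1n astar + m * Lam * eps2 * l1n d"
        using ww El1[of astar] El1[of d] by (simp add: algebra_simps)
      finally have "l1n (G *v d) \<le> m * Lam * eps1 + m * Lam * eps2 * l1n astar + m * Lam * eps2 * l1n d" .
      then show ?thesis using Mle[of d] M0 by (meson mult_left_mono order_trans)
    qed
    have sumeq: "ustar - (u0hat + (\<Sum>j\<in>UNIV. a $ j *\<^sub>R phihat j))
        = (u0 - u0hat) + (\<Sum>j\<in>UNIV. astar$j *\<^sub>R (phi j - phihat j) - d$j *\<^sub>R phihat j)"
    proof -
      have "(\<Sum>j\<in>UNIV. astar$j *\<^sub>R (phi j - phihat j) - d$j *\<^sub>R phihat j)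
          = (\<Sum>j\<in>UNIV. astar$j *\<^sub>R phi j - a$j *\<^sub>R phihat j)"
        by (intro sum.cong refl) (simp add: d_def algebra_simps)
      also have "\<dots> = P astar - (\<Sum>j\<in>UNIV. a$j *\<^sub>R phihat j)" by (simp add: P_def sum_subtractf)
      finally show ?thesis by (simp add: ustar_def algebra_simps)
    qed
    have "norm (ustar - (u0hat + (\<Sum>j\<in>UNIV. a $ j *\<^sub>R phihat j)))
        \<le> norm (u0 - u0hat) + (\<Sum>j\<in>UNIV. norm (astar$j *\<^sub>R (phi j - phihat j) - d$j *\<^sub>R phihat j))"
      unfolding sumeq by (rule order_trans[OF norm_triangle_ineq add_left_mono[OF norm_sum]])
    also have "\<dots> \<le> eps1 + (\<Sum>j\<in>UNIV. eps2 * \<bar>astar$j\<bar> + (C0 + eps2) * \<bar>d$j\<bar>)"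
    proof (intro add_mono sum_mono)
      show "norm (u0 - u0hat) \<le> eps1" by (rule u0hat_close)
    next
      fix j
      have "norm (astar$j *\<^sub>R (phi j - phihat j) - d$j *\<^sub>R phihat j)
          \<le> norm (astar$j *\<^sub>R (phi j - phihat j)) + norm (d$j *\<^sub>R phihat j)" by (rule norm_triangle_ineq4)
      also have "\<dots> = \<bar>astar$j\<bar> * norm (phi j - phihat j) + \<bar>d$j\<bar> * norm (phihat j)" by simp
      also have "\<dots> \<le> \<bar>astar$j\<bar> * eps2 + \<bar>d$j\<bar> * (C0 + eps2)"
        using phihat_close phihatnorm by (intro add_mono mult_left_mono) auto
      finally show "norm (astar$j *\<^sub>R (phi j - phihat j) - d$j *\<^sub>R phihat j)
          \<le> eps2 * \<bar>astar$j\<bar> + (C0 + eps2) * \<bar>d$j\<bar>" by (simp add: mult.commute)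
    qed
    also have "\<dots> = eps1 + eps2 * l1n astar + (C0 + eps2) * l1n d"
      by (simp add: l1n_def sum.distrib sum_distrib_left)
    also have "\<dots> \<le> eps"
      by (rule final_arith[OF M0 _ Lampos eps2_pos _ C0nn small A0 Ab l1n_nonneg Db def6 tol])
         (use def1 eps1_pos in auto)
    finally have e2: "norm (ustar - (u0hat + (\<Sum>j\<in>UNIV. a $ j *\<^sub>R phihat j))) \<le> eps" .
    have "norm (u - (u0hat + (\<Sum>j\<in>UNIV. a $ j *\<^sub>R phihat j)))
        \<le> norm (u - ustar) + norm (ustar - (u0hat + (\<Sum>j\<in>UNIV. a $ j *\<^sub>R phihat j)))"
    proof -
      have eqY: "(u - ustar) + (ustar - (u0hat + (\<Sum>j\<in>UNIV. a $ j *\<^sub>R phihat j)))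
          = u - (u0hat + (\<Sum>j\<in>UNIV. a $ j *\<^sub>R phihat j))" by (simp add: algebra_simps)
      show ?thesis
        using norm_triangle_ineq[of "u - ustar" "ustar - (u0hat + (\<Sum>j\<in>UNIV. a $ j *\<^sub>R phihat j))"]
        unfolding eqY .
    qed
    then show "norm (u - (u0hat + (\<Sum>j\<in>UNIV. a $ j *\<^sub>R phihat j))) \<le> cheb_radius Kw + eps"
      using center[OF uKw] e2 by simp
  qed
  show ?thesis using Ghatinv main by blast
qed

end
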